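(* Let $\mathbf A$ be a finite totally ordered algebra. Then $\mathrm{nuP}_{\mathbf A}\subseteq\mathrm{MULTIMONOTONE}$.
   Context: A finite algebra has a finite universe and finitely many basic operations; it is totally ordered if some total order on its universe is preserved by all its basic operations. An $n$-ary circuit over $\mathbf A$ is a DAG with one output node, sources labelled by variables $x_1,\dots,x_n$ or constants from $A$, gates labelled by basic operations of $\mathbf A$; its size is nodes plus edges. A NuDFA over $\mathbf A$ is $(\{t_n\}_{n\ge1},\iota,S)$ with $t_n$ an $n$-ary circuit, $\iota:\{0,1\}\to A$, $S\subseteq A$; it accepts $b\in\{0,1\}^n$ iff $t_n(\iota(b_1),\dots,\iota(b_n))\in S$; polynomial size means size of $t_n$ polynomial in $n$. $\mathrm{nuP}_{\mathbf A}$ is the class of languages over $\{0,1\}$ accepted by polynomial-size NuDFAs over $\mathbf A$. $\mathrm{MULTIMONOTONE}$ is the class of languages $L$ for which there is a constant $c$ such that for each $n$, $L\cap\{0,1\}^n=\{x:g(M_1(x),\dots,M_c(x))=1\}$ for some function $g:\{0,1\}^c\to\{0,1\}$ and circuits $M_1,\dots,M_c$ using only fan-in-2 $\wedge,\vee$ gates (on input variables and constants) of total size polynomial in $n$. *)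

theory Defs
  imports Main
begin

record 'a algebra =
  univ :: "'a set"
  ops  :: "(nat \<times> ('a list \<Rightarrow> 'a)) list"

definition finite_algebra :: "'a algebra \<Rightarrow> bool" where
  "finite_algebra A \<longleftrightarrow> finite (univ A) \<and> univ A \<noteq> {} \<and>
     (\<forall>(m, f) \<in> set (ops A). \<forall>xs. set xs \<subseteq> univ A \<and> length xs = m \<longrightarrow> f xs \<in> univ A)"

definition totally_ordered :: "'a algebra \<Rightarrow> bool" where
  "totally_ordered A \<longleftrightarrow> (\<exists>r. linear_order_on (univ A) r \<and>
     (\<forall>(m, f) \<in> set (ops A). \<forall>xs ys.
        set xs \<subseteq> univ A \<and> set ys \<subseteq> univ A \<and> length xs = m \<and> length ys = m \<and>
        list_all2 (\<lambda>a b. (a, b) \<in> r) xs ys \<longrightarrow> (f xs, f ys) \<in> r))"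

text \<open>A circuit (DAG) is represented in topologically sorted form as a list of
nodes; a node is an input variable x_(i+1) (Inp i), a constant, or a gate
labelled by the index of a basic operation together with the positions of its
predecessor nodes (which must occur earlier).\<close>
datatype 'a node = Inp nat | Cst 'a | Gate nat "nat list"

fun node_val :: "'a algebra \<Rightarrow> 'a list \<Rightarrow> 'a list \<Rightarrow> 'a node \<Rightarrow> 'a" where
  "node_val A x vs (Inp i) = x ! i"
| "node_val A x vs (Cst a) = a"
| "node_val A x vs (Gate k args) = snd (ops A ! k) (map (\<lambda>j. vs ! j) args)"

definition circ_vals :: "'a algebra \<Rightarrow> 'a list \<Rightarrow> 'a node list \<Rightarrow> 'a list" where
  "circ_vals A x gs = foldl (\<lambda>vs g. vs @ [node_val A x vs g]) [] gs"

definition circ_eval :: "'a algebra \<Rightarrow> 'a node list \<Rightarrow> 'a list \<Rightarrow> 'a" where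
  "circ_eval A gs x = last (circ_vals A x gs)"

definition wf_circuit :: "'a algebra \<Rightarrow> nat \<Rightarrow> 'a node list \<Rightarrow> bool" where
  "wf_circuit A n gs \<longleftrightarrow> gs \<noteq> [] \<and>
     (\<forall>p < length gs. case gs ! p of
        Inp i \<Rightarrow> i < n
      | Cst a \<Rightarrow> a \<in> univ A
      | Gate k args \<Rightarrow> k < length (ops A) \<and> length args = fst (ops A ! k) \<and> (\<forall>j \<in> set args. j < p))"

definition circ_size :: "'a node list \<Rightarrow> nat" where
  "circ_size gs = length gs + sum_list (map (\<lambda>g. case g of Gate _ args \<Rightarrow> length args | _ \<Rightarrow> 0) gs)"

definition nuP :: "'a algebra \<Rightarrow> bool list set set" where
  "nuP A = {L. \<exists>(t :: nat \<Rightarrow> 'a node list) (\<iota> :: bool \<Rightarrow> 'a) S.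
      (\<forall>n\<ge>1. wf_circuit A n (t n)) \<and> range \<iota> \<subseteq> univ A \<and> S \<subseteq> univ A \<and>
      (\<exists>c::nat. \<forall>n\<ge>1. circ_size (t n) \<le> c * n ^ c + c) \<and>
      (\<forall>b. length b \<ge> 1 \<longrightarrow> (b \<in> L \<longleftrightarrow> circ_eval A (t (length b)) (map \<iota> b) \<in> S))}"

text \<open>Monotone circuits: circuits over the two-element algebra with fan-in-2
AND (op 0) and OR (op 1); constants 0/1 are allowed as sources.\<close>
definition bool_alg :: "bool algebra" where
  "bool_alg = \<lparr>univ = UNIV, ops = [(2, \<lambda>xs. xs ! 0 \<and> xs ! 1), (2, \<lambda>xs. xs ! 0 \<or> xs ! 1)]\<rparr>"

definition MULTIMONOTONE :: "bool list set set" where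
  "MULTIMONOTONE = {L. \<exists>(c::nat) (d::nat). \<forall>n.
      \<exists>(g :: bool list \<Rightarrow> bool) (M :: nat \<Rightarrow> bool node list).
        (\<forall>i<c. wf_circuit bool_alg n (M i)) \<and>
        (\<Sum>i<c. circ_size (M i)) \<le> d * n ^ d + d \<and>
        (\<forall>x. length x = n \<longrightarrow> (x \<in> L \<longleftrightarrow> g (map (\<lambda>i. circ_eval bool_alg (M i) x) [0..<c])))}"

end

theory Submission
  imports Defs
begin


definition FS :: "'a algebra \<Rightarrow> 'a list \<Rightarrow> 'a list \<Rightarrow> 'a node \<Rightarrow> 'a list" where
  "FS A x = (\<lambda>vs g. vs @ [node_val A x vs g])"

lemma circ_vals_FS: "circ_vals A x gs = foldl (FS A x) [] gs"
  by (simp add: circ_vals_def FS_def)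

lemma foldl_FS_prefix: "\<exists>ws. foldl (FS A x) vs gs = vs @ ws \<and> length ws = length gs"
proof (induction gs arbitrary: vs)
  case Nil then show ?case by simp
next
  case (Cons g gs)
  from Cons.IH[of "vs @ [node_val A x vs g]"] obtain ws where
    "foldl (FS A x) (vs @ [node_val A x vs g]) gs = (vs @ [node_val A x vs g]) @ ws \<and> length ws = length gs" by blast
  then show ?case by (auto simp: FS_def intro!: exI[of _ "node_val A x vs g # ws"])
qed

lemma circ_vals_length[simp]: "length (circ_vals A x gs) = length gs"
  using foldl_FS_prefix[of A x "[]" gs] by (auto simp: circ_vals_FS)

lemma circ_vals_snoc: "circ_vals A x (gs @ [g]) = circ_vals A x gs @ [node_val A x (circ_vals A x gs) g]"
  by (simp add: circ_vals_def)

lemma circ_vals_nth: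
  "p < length gs \<Longrightarrow> circ_vals A x gs ! p = node_val A x (take p (circ_vals A x gs)) (gs ! p)"
proof (induction gs rule: rev_induct)
  case Nil then show ?case by simp
next
  case (snoc g gs)
  show ?case
  proof (cases "p < length gs")
    case True
    then show ?thesis using snoc by (simp add: circ_vals_snoc nth_append)
  next
    case False
    then have "p = length gs" using snoc.prems by simp
    then show ?thesis by (simp add: circ_vals_snoc nth_append)
  qed
qed

lemma circ_vals_append_prefix:
  "i < length gs \<Longrightarrow> circ_vals A x (gs @ hs) ! i = circ_vals A x gs ! i"
proof -
  obtain ws where "circ_vals A x (gs @ hs) = circ_vals A x gs @ ws"
    using foldl_FS_prefix[of A x "circ_vals A x gs" hs] by (auto simp: circ_vals_FS)
  moreover assume "i < length gs"
  ultimately show ?thesis by (simp add: nth_append)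
qed

lemma circ_size_append[simp]: "circ_size (a @ b) = circ_size a + circ_size b"
  by (simp add: circ_size_def)

datatype mexp = MVar nat | MRef nat | MConst bool | MAnd mexp mexp | MOr mexp mexp

fun meval :: "(nat \<Rightarrow> bool) \<Rightarrow> bool list \<Rightarrow> mexp \<Rightarrow> bool" where
  "meval E x (MVar i) = x ! i"
| "meval E x (MRef j) = E j"
| "meval E x (MConst b) = b"
| "meval E x (MAnd e1 e2) = (meval E x e1 \<and> meval E x e2)"
| "meval E x (MOr e1 e2) = (meval E x e1 \<or> meval E x e2)"

fun mok :: "nat \<Rightarrow> nat \<Rightarrow> mexp \<Rightarrow> bool" where
  "mok N n (MVar i) = (i < n)"
| "mok N n (MRef j) = (j < N)"
| "mok N n (MConst b) = True"
| "mok N n (MAnd e1 e2) = (mok N n e1 \<and> mok N n e2)"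
| "mok N n (MOr e1 e2) = (mok N n e1 \<and> mok N n e2)"

fun msize :: "mexp \<Rightarrow> nat" where
  "msize (MAnd e1 e2) = msize e1 + msize e2 + 1"
| "msize (MOr e1 e2) = msize e1 + msize e2 + 1"
| "msize _ = 1"

fun mcomp :: "nat \<Rightarrow> mexp \<Rightarrow> bool node list" where
  "mcomp b (MVar i) = [Inp i]"
| "mcomp b (MRef j) = [Gate 1 [j, j]]"
| "mcomp b (MConst c) = [Cst c]"
| "mcomp b (MAnd e1 e2) = (let l1 = mcomp b e1; l2 = mcomp (b + length l1) e2 in
     l1 @ l2 @ [Gate 0 [b + length l1 - 1, b + length l1 + length l2 - 1]])"
| "mcomp b (MOr e1 e2) = (let l1 = mcomp b e1; l2 = mcomp (b + length l1) e2 in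
     l1 @ l2 @ [Gate 1 [b + length l1 - 1, b + length l1 + length l2 - 1]])"

lemma mcomp_ne[simp]: "mcomp b e \<noteq> []"
  by (cases e) (auto simp: Let_def)

lemma mok_mono: "mok N n e \<Longrightarrow> N \<le> N' \<Longrightarrow> mok N' n e"
  by (induction e) auto

lemma meval_cong: "mok N n e \<Longrightarrow> (\<And>j. j < N \<Longrightarrow> E j = E' j) \<Longrightarrow> meval E x e = meval E' x e"
  by (induction e) auto

lemma mcomp_size: "circ_size (mcomp b e) \<le> 3 * msize e"
  by (induction b e rule: mcomp.induct) (auto simp: Let_def circ_size_def)

lemma bool_alg_ops: "ops bool_alg = [(2, \<lambda>xs. xs ! 0 \<and> xs ! 1), (2, \<lambda>xs. xs ! 0 \<or> xs ! 1)]"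
  by (simp add: bool_alg_def)

lemma mcomp_eval:
  assumes "mok (length vs) (length x) e"
  shows "\<exists>ws. foldl (FS bool_alg x) vs (mcomp (length vs) e) = vs @ ws \<and> ws \<noteq> [] \<and>
            length ws = length (mcomp (length vs) e) \<and> last ws = meval (\<lambda>j. vs ! j) x e"
  using assms
proof (induction e arbitrary: vs)
  case (MVar i) then show ?case by (simp add: FS_def)
next
  case (MRef j) then show ?case by (simp add: FS_def bool_alg_ops)
next
  case (MConst c) then show ?case by (simp add: FS_def)
next
  case (MAnd e1 e2)
  define l1 where "l1 = mcomp (length vs) e1"
  obtain ws1 where w1: "foldl (FS bool_alg x) vs l1 = vs @ ws1" "ws1 \<noteq> []" "length ws1 = length l1"
    "last ws1 = meval (\<lambda>j. vs ! j) x e1"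
    using MAnd.IH(1)[of vs] MAnd.prems unfolding l1_def by auto
  define l2 where "l2 = mcomp (length (vs @ ws1)) e2"
  have ok2: "mok (length (vs @ ws1)) (length x) e2" using MAnd.prems mok_mono by fastforce
  obtain ws2 where w2: "foldl (FS bool_alg x) (vs @ ws1) l2 = (vs @ ws1) @ ws2" "ws2 \<noteq> []" "length ws2 = length l2"
    "last ws2 = meval (\<lambda>j. (vs @ ws1) ! j) x e2"
    using MAnd.IH(2)[OF ok2] unfolding l2_def by auto
  have e2: "meval (\<lambda>j. (vs @ ws1) ! j) x e2 = meval (\<lambda>j. vs ! j) x e2"
    using MAnd.prems by (intro meval_cong[of "length vs" "length x"]) (auto simp: nth_append)
  have L2: "mcomp (length vs + length l1) e2 = l2" using w1 by (simp add: l2_def)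
  have i1: "length vs + length l1 - 1 = length vs + (length ws1 - 1)" using w1 by (cases ws1) auto
  have i2: "length vs + length l1 + length l2 - 1 = length (vs @ ws1) + (length ws2 - 1)" using w1 w2 by (cases ws2) auto
  have a1: "(vs @ ws1 @ ws2) ! (length vs + length l1 - 1) = last ws1"
    unfolding i1 nth_append_length_plus using w1(2) by (simp add: nth_append last_conv_nth)
  have a2: "(vs @ ws1 @ ws2) ! (length vs + length l1 + length l2 - 1) = last ws2"
    unfolding i2 using w2(2) by (simp only: append_assoc[symmetric] nth_append_length_plus) (simp add: last_conv_nth)
  show ?case
    using w1 w2 e2 a1 a2
    by (auto simp: Let_def L2 FS_def bool_alg_ops simp flip: l1_def)
next
  case (MOr e1 e2)
  define l1 where "l1 = mcomp (length vs) e1"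
  obtain ws1 where w1: "foldl (FS bool_alg x) vs l1 = vs @ ws1" "ws1 \<noteq> []" "length ws1 = length l1"
    "last ws1 = meval (\<lambda>j. vs ! j) x e1"
    using MOr.IH(1)[of vs] MOr.prems unfolding l1_def by auto
  define l2 where "l2 = mcomp (length (vs @ ws1)) e2"
  have ok2: "mok (length (vs @ ws1)) (length x) e2" using MOr.prems mok_mono by fastforce
  obtain ws2 where w2: "foldl (FS bool_alg x) (vs @ ws1) l2 = (vs @ ws1) @ ws2" "ws2 \<noteq> []" "length ws2 = length l2"
    "last ws2 = meval (\<lambda>j. (vs @ ws1) ! j) x e2"
    using MOr.IH(2)[OF ok2] unfolding l2_def by auto
  have e2: "meval (\<lambda>j. (vs @ ws1) ! j) x e2 = meval (\<lambda>j. vs ! j) x e2"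
    using MOr.prems by (intro meval_cong[of "length vs" "length x"]) (auto simp: nth_append)
  have L2: "mcomp (length vs + length l1) e2 = l2" using w1 by (simp add: l2_def)
  have i1: "length vs + length l1 - 1 = length vs + (length ws1 - 1)" using w1 by (cases ws1) auto
  have i2: "length vs + length l1 + length l2 - 1 = length (vs @ ws1) + (length ws2 - 1)" using w1 w2 by (cases ws2) auto
  have a1: "(vs @ ws1 @ ws2) ! (length vs + length l1 - 1) = last ws1"
    unfolding i1 nth_append_length_plus using w1(2) by (simp add: nth_append last_conv_nth)
  have a2: "(vs @ ws1 @ ws2) ! (length vs + length l1 + length l2 - 1) = last ws2"
    unfolding i2 using w2(2) by (simp only: append_assoc[symmetric] nth_append_length_plus) (simp add: last_conv_nth)
  show ?case
    using w1 w2 e2 a1 a2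
    by (auto simp: Let_def L2 FS_def bool_alg_ops simp flip: l1_def)
qed

definition nokb :: "nat \<Rightarrow> nat \<Rightarrow> bool node \<Rightarrow> bool" where
  "nokb n p g = (case g of Inp i \<Rightarrow> i < n | Cst a \<Rightarrow> a \<in> univ bool_alg
     | Gate k args \<Rightarrow> k < length (ops bool_alg) \<and> length args = fst (ops bool_alg ! k) \<and> (\<forall>j \<in> set args. j < p))"

definition wfb :: "nat \<Rightarrow> bool node list \<Rightarrow> bool" where
  "wfb n gs = (\<forall>p < length gs. nokb n p (gs ! p))"

lemma wf_circuit_bool: "wf_circuit bool_alg n gs \<longleftrightarrow> gs \<noteq> [] \<and> wfb n gs"
  by (simp add: wf_circuit_def wfb_def nokb_def)

lemma wfb_snoc: "wfb n (gs @ [g]) \<longleftrightarrow> wfb n gs \<and> nokb n (length gs) g"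
  by (auto simp: wfb_def nth_append less_Suc_eq)

lemma wfb_mcomp: "wfb n out \<Longrightarrow> mok (length out) n e \<Longrightarrow> wfb n (out @ mcomp (length out) e)"
proof (induction e arbitrary: out)
  case (MVar i) then show ?case by (simp add: wfb_snoc nokb_def)
next
  case (MRef j) then show ?case by (simp add: wfb_snoc nokb_def bool_alg_ops)
next
  case (MConst c) then show ?case by (simp add: wfb_snoc nokb_def bool_alg_def)
next
  case (MAnd e1 e2)
  define l1 where "l1 = mcomp (length out) e1"
  have w1: "wfb n (out @ l1)" using MAnd unfolding l1_def by simp
  define l2 where "l2 = mcomp (length (out @ l1)) e2"
  have w2: "wfb n ((out @ l1) @ l2)" unfolding l2_def
    using MAnd.IH(2)[OF w1] MAnd.prems mok_mono by fastforce
  have ne: "l1 \<noteq> []" "l2 \<noteq> []" unfolding l1_def l2_def by auto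
  have eq: "mcomp (length out) (MAnd e1 e2) = l1 @ l2 @ [Gate 0 [length out + length l1 - 1, length out + length l1 + length l2 - 1]]"
    by (simp add: Let_def l1_def l2_def)
  have g: "wfb n (((out @ l1) @ l2) @ [Gate 0 [length out + length l1 - 1, length out + length l1 + length l2 - 1]])"
    unfolding wfb_snoc proof (intro conjI)
    have "length l1 \<ge> 1" "length l2 \<ge> 1" using ne by (auto simp: Suc_le_eq)
    then show "nokb n (length ((out @ l1) @ l2)) (Gate 0 [length out + length l1 - 1, length out + length l1 + length l2 - 1])" by (auto simp: nokb_def bool_alg_ops)
  qed (rule w2)
  show ?case unfolding eq using g by simp
next
  case (MOr e1 e2)
  define l1 where "l1 = mcomp (length out) e1"
  have w1: "wfb n (out @ l1)" using MOr unfolding l1_def by simp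
  define l2 where "l2 = mcomp (length (out @ l1)) e2"
  have w2: "wfb n ((out @ l1) @ l2)" unfolding l2_def
    using MOr.IH(2)[OF w1] MOr.prems mok_mono by fastforce
  have ne: "l1 \<noteq> []" "l2 \<noteq> []" unfolding l1_def l2_def by auto
  have eq: "mcomp (length out) (MOr e1 e2) = l1 @ l2 @ [Gate 1 [length out + length l1 - 1, length out + length l1 + length l2 - 1]]"
    by (simp add: Let_def l1_def l2_def)
  have g: "wfb n (((out @ l1) @ l2) @ [Gate 1 [length out + length l1 - 1, length out + length l1 + length l2 - 1]])"
    unfolding wfb_snoc proof (intro conjI)
    have "length l1 \<ge> 1" "length l2 \<ge> 1" using ne by (auto simp: Suc_le_eq)
    then show "nokb n (length ((out @ l1) @ l2)) (Gate 1 [length out + length l1 - 1, length out + length l1 + length l2 - 1])" by (auto simp: nokb_def bool_alg_ops)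
  qed (rule w2)
  show ?case unfolding eq using g by simp
qed

lemma mcomp_eval_cv:
  assumes "mok (length out) (length x) e"
  shows "circ_vals bool_alg x (out @ mcomp (length out) e) ! (length (out @ mcomp (length out) e) - 1)
           = meval (\<lambda>j. circ_vals bool_alg x out ! j) x e"
proof -
  have L: "length (circ_vals bool_alg x out) = length out" by simp
  obtain ws where w: "foldl (FS bool_alg x) (circ_vals bool_alg x out) (mcomp (length out) e) = circ_vals bool_alg x out @ ws"
    "ws \<noteq> []" "length ws = length (mcomp (length out) e)" "last ws = meval (\<lambda>j. circ_vals bool_alg x out ! j) x e"
    using mcomp_eval[of "circ_vals bool_alg x out" x e] assms by (auto simp: L)
  have "circ_vals bool_alg x (out @ mcomp (length out) e) = circ_vals bool_alg x out @ ws"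
    using w(1) by (simp add: circ_vals_FS)
  moreover have "length (out @ mcomp (length out) e) - 1 = length (circ_vals bool_alg x out) + (length ws - 1)"
    using w(2,3) L by (cases ws) auto
  ultimately show ?thesis using w(2,4)
    by (simp only: nth_append_length_plus) (simp add: last_conv_nth)
qed

definition bigand :: "mexp list \<Rightarrow> mexp" where "bigand es = foldr MAnd es (MConst True)"
definition bigor :: "mexp list \<Rightarrow> mexp" where "bigor es = foldr MOr es (MConst False)"

lemma bigand_eval[simp]: "meval E x (bigand es) = (\<forall>e\<in>set es. meval E x e)"
  by (induction es) (auto simp: bigand_def)
lemma bigor_eval[simp]: "meval E x (bigor es) = (\<exists>e\<in>set es. meval E x e)"
  by (induction es) (auto simp: bigor_def)
lemma bigand_ok[simp]: "mok N n (bigand es) = (\<forall>e\<in>set es. mok N n e)"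
  by (induction es) (auto simp: bigand_def)
lemma bigor_ok[simp]: "mok N n (bigor es) = (\<forall>e\<in>set es. mok N n e)"
  by (induction es) (auto simp: bigor_def)
lemma bigand_size: "(\<And>e. e \<in> set es \<Longrightarrow> msize e \<le> B) \<Longrightarrow> msize (bigand es) \<le> length es * (B + 1) + 1"
  by (induction es) (auto simp: bigand_def, fastforce)
lemma bigor_size: "(\<And>e. e \<in> set es \<Longrightarrow> msize e \<le> B) \<Longrightarrow> msize (bigor es) \<le> length es * (B + 1) + 1"
  by (induction es) (auto simp: bigor_def, fastforce)

lemma length_n_lists: "length (List.n_lists m xs) = length xs ^ m"
  by (induction m) (auto simp: length_concat comp_def sum_list_triv)



fun thr :: "'a algebra \<Rightarrow> ('a \<times> 'a) set \<Rightarrow> (bool \<Rightarrow> 'a) \<Rightarrow> 'a list \<Rightarrow> (nat \<times> 'a \<Rightarrow> nat) \<Rightarrow> 'a node \<Rightarrow> 'a \<Rightarrow> mexp" where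
  "thr A r \<iota> as pos (Inp i) a = (if (a, \<iota> False) \<in> r then MConst True else if (a, \<iota> True) \<in> r then MVar i else MConst False)"
| "thr A r \<iota> as pos (Cst b) a = MConst ((a, b) \<in> r)"
| "thr A r \<iota> as pos (Gate q args) a = bigor (map (\<lambda>c. bigand (map (\<lambda>(j, ci). MRef (pos (j, ci))) (zip args c)))
      (filter (\<lambda>c. (a, snd (ops A ! q) c) \<in> r) (List.n_lists (fst (ops A ! q)) as)))"

definition stepa :: "'a algebra \<Rightarrow> ('a \<times> 'a) set \<Rightarrow> (bool \<Rightarrow> 'a) \<Rightarrow> 'a list \<Rightarrow> nat \<Rightarrow> 'a node \<Rightarrow>
    bool node list \<times> (nat \<times> 'a \<Rightarrow> nat) \<Rightarrow> 'a \<Rightarrow> bool node list \<times> (nat \<times> 'a \<Rightarrow> nat)" where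
  "stepa A r \<iota> as p g st a = (let out' = fst st @ mcomp (length (fst st)) (thr A r \<iota> as (snd st) g a)
     in (out', (snd st)((p, a) := length out' - 1)))"

fun bld :: "'a algebra \<Rightarrow> ('a \<times> 'a) set \<Rightarrow> (bool \<Rightarrow> 'a) \<Rightarrow> 'a list \<Rightarrow>
    bool node list \<times> (nat \<times> 'a \<Rightarrow> nat) \<Rightarrow> nat \<Rightarrow> 'a node list \<Rightarrow> bool node list \<times> (nat \<times> 'a \<Rightarrow> nat)" where
  "bld A r \<iota> as st p [] = st"
| "bld A r \<iota> as st p (g # gs) = bld A r \<iota> as (foldl (stepa A r \<iota> as p g) st as) (Suc p) gs"

definition gok :: "'a algebra \<Rightarrow> 'a node \<Rightarrow> bool" where
  "gok A g = (case g of Gate q _ \<Rightarrow> q < length (ops A) | _ \<Rightarrow> True)"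

definition KK :: "'a algebra \<Rightarrow> 'a list \<Rightarrow> nat" where
  "KK A as = length as ^ sum_list (map fst (ops A)) * (2 * sum_list (map fst (ops A)) + 2) + 1"

lemma thr_size:
  assumes "gok A g" and "as \<noteq> []"
  shows "msize (thr A r \<iota> as pos g a) \<le> KK A as"
proof (cases g)
  case (Gate q args)
  define m where "m = fst (ops A ! q)"
  define MX where "MX = sum_list (map fst (ops A))"
  have q: "q < length (ops A)" using assms Gate by (auto simp: gok_def)
  have mMX: "m \<le> MX" unfolding m_def MX_def
    by (rule member_le_sum_list) (use q in auto)
  have k1: "length as \<ge> 1" using assms(2) by (cases as) auto
  have b1: "msize (bigand (map (\<lambda>(j, ci). MRef (pos (j, ci))) (zip args c))) \<le> 2 * m + 1"
    if "c \<in> set (List.n_lists m as)" for c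
  proof -
    have "msize (bigand (map (\<lambda>(j, ci). MRef (pos (j, ci))) (zip args c))) \<le> length (map (\<lambda>(j, ci). MRef (pos (j, ci))) (zip args c)) * (1 + 1) + 1"
      by (rule bigand_size) auto
    moreover have "length (zip args c) \<le> m" using length_n_lists_elem[OF that] by simp
    moreover have "length (zip args c) * (1 + 1) + 1 \<le> 2 * m + 1" using calculation(2) by simp
    ultimately show ?thesis by (simp only: length_map)
  qed
  have "msize (thr A r \<iota> as pos g a) \<le> length (filter (\<lambda>c. (a, snd (ops A ! q) c) \<in> r) (List.n_lists m as)) * (2 * m + 2) + 1"
    unfolding Gate thr.simps m_def[symmetric]
    using bigor_size[of "map (\<lambda>c. bigand (map (\<lambda>(j, ci). MRef (pos (j, ci))) (zip args c)))
      (filter (\<lambda>c. (a, snd (ops A ! q) c) \<in> r) (List.n_lists m as))" "2 * m + 1"] b1 by auto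
  also have "\<dots> \<le> length as ^ m * (2 * m + 2) + 1"
    using length_filter_le[of "\<lambda>c. (a, snd (ops A ! q) c) \<in> r" "List.n_lists m as"]
    unfolding length_n_lists by (intro add_mono mult_right_mono) auto
  also have "\<dots> \<le> length as ^ MX * (2 * MX + 2) + 1"
    using mMX k1 by (intro add_mono mult_mono power_increasing) auto
  finally show ?thesis by (simp add: KK_def MX_def)
qed (auto simp: KK_def)

lemma stepa_size: "gok A g \<Longrightarrow> as \<noteq> [] \<Longrightarrow>
   circ_size (fst (stepa A r \<iota> as p g st a)) \<le> circ_size (fst st) + 3 * KK A as"
  using thr_size[where g=g and A=A and as=as and r=r and \<iota>=\<iota> and pos="snd st" and a=a] mcomp_size[of "length (fst st)" "thr A r \<iota> as (snd st) g a"]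
  by (simp add: stepa_def Let_def)

lemma stepn_size: "gok A g \<Longrightarrow> as \<noteq> [] \<Longrightarrow>
   circ_size (fst (foldl (stepa A r \<iota> as p g) st ys)) \<le> circ_size (fst st) + length ys * (3 * KK A as)"
proof (induction ys arbitrary: st)
  case Nil then show ?case by simp
next
  case (Cons y ys)
  show ?case
    using Cons.IH[OF Cons.prems, where st="stepa A r \<iota> as p g st y"] stepa_size[OF Cons.prems, where r=r and \<iota>=\<iota> and p=p and st=st and a=y]
    by simp
qed

lemma bld_size: "(\<forall>g\<in>set gs. gok A g) \<Longrightarrow> as \<noteq> [] \<Longrightarrow>
   circ_size (fst (bld A r \<iota> as st p gs)) \<le> circ_size (fst st) + length gs * (length as * (3 * KK A as))"
proof (induction gs arbitrary: st p)
  case Nil then show ?case by simp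
next
  case (Cons g gs)
  have a: "circ_size (fst (foldl (stepa A r \<iota> as p g) st as)) \<le> circ_size (fst st) + length as * (3 * KK A as)"
    by (rule stepn_size) (use Cons.prems in auto)
  have b: "circ_size (fst (bld A r \<iota> as (foldl (stepa A r \<iota> as p g) st as) (Suc p) gs))
      \<le> circ_size (fst (foldl (stepa A r \<iota> as p g) st as)) + length gs * (length as * (3 * KK A as))"
    by (rule Cons.IH) (use Cons.prems in auto)
  show ?case using a b by simp
qed



locale core =
  fixes A :: "'a algebra" and r :: "('a \<times> 'a) set" and \<iota> :: "bool \<Rightarrow> 'a" and as :: "'a list"
    and n :: nat and t :: "'a node list"
  assumes clos: "\<forall>(m, f) \<in> set (ops A). \<forall>xs. set xs \<subseteq> univ A \<and> length xs = m \<longrightarrow> f xs \<in> univ A"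
    and reflr: "\<And>a. a \<in> univ A \<Longrightarrow> (a, a) \<in> r"
    and trans: "trans r"
    and mono: "\<forall>(m, f) \<in> set (ops A). \<forall>xs ys.
        set xs \<subseteq> univ A \<and> set ys \<subseteq> univ A \<and> length xs = m \<and> length ys = m \<and>
        list_all2 (\<lambda>a b. (a, b) \<in> r) xs ys \<longrightarrow> (f xs, f ys) \<in> r"
    and iota: "(\<iota> False, \<iota> True) \<in> r"
    and rng: "range \<iota> \<subseteq> univ A"
    and as: "set as = univ A"
    and wf: "wf_circuit A n t"
begin

abbreviation V :: "bool list \<Rightarrow> 'a list" where "V x \<equiv> circ_vals A (map \<iota> x) t"

lemma t_node: "p < length t \<Longrightarrow> (case t ! p of Inp i \<Rightarrow> i < n | Cst a \<Rightarrow> a \<in> univ A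
      | Gate k args \<Rightarrow> k < length (ops A) \<and> length args = fst (ops A ! k) \<and> (\<forall>j \<in> set args. j < p))"
  using wf by (auto simp: wf_circuit_def)

lemma V_nth: "p < length t \<Longrightarrow> V x ! p = node_val A (map \<iota> x) (V x) (t ! p)"
proof -
  assume p: "p < length t"
  have "V x ! p = node_val A (map \<iota> x) (take p (V x)) (t ! p)" using circ_vals_nth[OF p] .
  also have "\<dots> = node_val A (map \<iota> x) (V x) (t ! p)"
  proof (cases "t ! p")
    case (Gate k args)
    then have "\<forall>j \<in> set args. j < p" using t_node[OF p] by auto
    then show ?thesis unfolding Gate node_val.simps
      by (intro arg_cong[where f="snd (ops A ! k)"] map_cong[OF refl]) simp
  qed auto
  finally show ?thesis .
qed

lemma V_in: "length x = n \<Longrightarrow> p < length t \<Longrightarrow> V x ! p \<in> univ A"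
proof (induction p rule: less_induct)
  case (less p)
  show ?case
  proof (cases "t ! p")
    case (Inp i)
    then have "i < n" using t_node[OF less.prems(2)] by simp
    then show ?thesis using V_nth[OF less.prems(2)] Inp less.prems rng by auto
  next
    case (Cst a)
    then show ?thesis using V_nth[OF less.prems(2)] t_node[OF less.prems(2)] by auto
  next
    case (Gate k args)
    have tn: "k < length (ops A)" "length args = fst (ops A ! k)" "\<forall>j \<in> set args. j < p"
      using t_node[OF less.prems(2)] Gate by auto
    have mem: "ops A ! k \<in> set (ops A)" using tn(1) by simp
    have "set (map (\<lambda>j. V x ! j) args) \<subseteq> univ A" using less tn(3) by auto
    then have "snd (ops A ! k) (map (\<lambda>j. V x ! j) args) \<in> univ A"
      using clos mem tn(2) by (cases "ops A ! k") fastforce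
    then show ?thesis using V_nth[OF less.prems(2)] Gate by simp
  qed
qed

definition Inv :: "(nat \<times> 'a) set \<Rightarrow> bool node list \<times> (nat \<times> 'a \<Rightarrow> nat) \<Rightarrow> bool" where
  "Inv D st = (wfb n (fst st) \<and> (\<forall>qa\<in>D. snd st qa < length (fst st) \<and>
     (\<forall>x. length x = n \<longrightarrow> circ_vals bool_alg x (fst st) ! snd st qa = ((snd qa, V x ! fst qa) \<in> r))))"

lemma thr_ok:
  assumes p: "p < length t" and I: "Inv D st" and D: "{(q, b). q < p \<and> b \<in> set as} \<subseteq> D"
  shows "mok (length (fst st)) n (thr A r \<iota> as (snd st) (t ! p) a)"
proof (cases "t ! p")
  case (Inp i) then show ?thesis using t_node[OF p] by auto
next
  case (Cst b) then show ?thesis by simp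
next
  case (Gate k args)
  have j: "\<forall>j \<in> set args. j < p" using t_node[OF p] Gate by auto
  have "snd st (j, ci) < length (fst st)" if "(j, ci) \<in> set (zip args c)" "c \<in> set (List.n_lists (fst (ops A ! k)) as)" for j ci c
  proof -
    have "j \<in> set args" using set_zip_leftD[OF that(1)] .
    moreover have "ci \<in> set as" using set_zip_rightD[OF that(1)] that(2) by (auto simp: set_n_lists)
    ultimately have "(j, ci) \<in> D" using D j by auto
    then show ?thesis using I by (auto simp: Inv_def)
  qed
  then show ?thesis using Gate by auto
qed

lemma thr_eval:
  assumes p: "p < length t" and I: "Inv D st" and D: "{(q, b). q < p \<and> b \<in> set as} \<subseteq> D"
    and x: "length x = n" and a: "a \<in> univ A"
  shows "meval (\<lambda>j. circ_vals bool_alg x (fst st) ! j) x (thr A r \<iota> as (snd st) (t ! p) a) = ((a, V x ! p) \<in> r)"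
proof (cases "t ! p")
  case (Inp i)
  have i: "i < length x" using t_node[OF p] Inp x by auto
  have vp: "V x ! p = \<iota> (x ! i)" using V_nth[OF p] Inp i by simp
  show ?thesis
  proof (cases "(a, \<iota> False) \<in> r")
    case True
    then have "(a, \<iota> b) \<in> r" for b using iota trans by (cases b) (auto dest: transD)
    then show ?thesis using True Inp vp by simp
  next
    case False
    then show ?thesis using Inp vp by (cases "x ! i") auto
  qed
next
  case (Cst b) then show ?thesis using V_nth[OF p] by simp
next
  case (Gate k args)
  obtain m f where mf: "ops A ! k = (m, f)" by fastforce
  have tn: "k < length (ops A)" "length args = m" "\<forall>j \<in> set args. j < p"
    using t_node[OF p] Gate mf by auto
  have mem: "(m, f) \<in> set (ops A)" using tn(1) mf by (metis nth_mem)
  define v where "v = map (\<lambda>j. V x ! j) args"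
  have vp: "V x ! p = f v" using V_nth[OF p] Gate mf by (simp add: v_def)
  have vA: "set v \<subseteq> univ A" unfolding v_def using V_in[OF x] tn(3) p by auto
  have lv: "length v = m" using tn(2) by (simp add: v_def)
  have cv: "circ_vals bool_alg x (fst st) ! snd st (j, ci) = ((ci, V x ! j) \<in> r)"
    if "j \<in> set args" "ci \<in> set as" for j ci
  proof -
    have "(j, ci) \<in> D" using D tn(3) that by auto
    then show ?thesis using I x by (auto simp: Inv_def)
  qed
  have zipeq: "(\<forall>(j, ci) \<in> set (zip args c). circ_vals bool_alg x (fst st) ! snd st (j, ci))
      = list_all2 (\<lambda>a b. (a, b) \<in> r) c v" if "c \<in> set (List.n_lists m as)" for c
  proof -
    have lc: "length c = m" and sc: "set c \<subseteq> set as" using that by (auto simp: set_n_lists)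
    have "(\<forall>(j, ci) \<in> set (zip args c). circ_vals bool_alg x (fst st) ! snd st (j, ci))
        = (\<forall>(j, ci) \<in> set (zip args c). (ci, V x ! j) \<in> r)"
    proof (rule ball_cong[OF refl])
      fix z assume z: "z \<in> set (zip args c)"
      obtain j ci where zz: "z = (j, ci)" by fastforce
      have "j \<in> set args" "ci \<in> set as" using z sc unfolding zz by (auto dest: set_zip_leftD set_zip_rightD)
      then show "(case z of (j, ci) \<Rightarrow> circ_vals bool_alg x (fst st) ! snd st (j, ci)) = (case z of (j, ci) \<Rightarrow> (ci, V x ! j) \<in> r)"
        unfolding zz using cv by simp
    qed
    also have "\<dots> = (\<forall>i < m. (c ! i, v ! i) \<in> r)"
      using lc tn(2) by (auto simp: set_zip v_def)
    also have "\<dots> = list_all2 (\<lambda>a b. (a, b) \<in> r) c v"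
      using lc lv by (simp add: list_all2_conv_all_nth)
    finally show ?thesis .
  qed
  have lhs: "meval (\<lambda>j. circ_vals bool_alg x (fst st) ! j) x (thr A r \<iota> as (snd st) (t ! p) a)
     = (\<exists>c \<in> set (List.n_lists m as). (a, f c) \<in> r \<and> list_all2 (\<lambda>a b. (a, b) \<in> r) c v)"
    using zipeq by (auto simp: Gate mf)
  have "(\<exists>c \<in> set (List.n_lists m as). (a, f c) \<in> r \<and> list_all2 (\<lambda>a b. (a, b) \<in> r) c v) = ((a, f v) \<in> r)"
  proof
    assume "\<exists>c \<in> set (List.n_lists m as). (a, f c) \<in> r \<and> list_all2 (\<lambda>a b. (a, b) \<in> r) c v"
    then obtain c where c: "c \<in> set (List.n_lists m as)" "(a, f c) \<in> r" "list_all2 (\<lambda>a b. (a, b) \<in> r) c v" by blast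
    have "length c = m" "set c \<subseteq> univ A" using c(1) as by (auto simp: set_n_lists)
    then have "(f c, f v) \<in> r" using mono mem vA lv c(3) by fastforce
    then show "(a, f v) \<in> r" using c(2) trans by (auto dest: transD)
  next
    assume "(a, f v) \<in> r"
    moreover have "v \<in> set (List.n_lists m as)" using vA lv as by (auto simp: set_n_lists)
    moreover have "list_all2 (\<lambda>a b. (a, b) \<in> r) v v"
      using vA reflr by (auto simp: list_all2_conv_all_nth intro!: reflr dest: nth_mem)
    ultimately show "\<exists>c \<in> set (List.n_lists m as). (a, f c) \<in> r \<and> list_all2 (\<lambda>a b. (a, b) \<in> r) c v" by blast
  qed
  then show ?thesis using lhs vp by simp
qed

end


context core begin

lemma stepa_inv:
  assumes p: "p < length t" and I: "Inv D st" and D: "{(q, b). q < p \<and> b \<in> set as} \<subseteq> D"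
    and a: "a \<in> set as"
  shows "Inv (insert (p, a) D) (stepa A r \<iota> as p (t ! p) st a)"
proof -
  define out where "out = fst st"
  define pos where "pos = snd st"
  define e where "e = thr A r \<iota> as pos (t ! p) a"
  define out' where "out' = out @ mcomp (length out) e"
  have st': "stepa A r \<iota> as p (t ! p) st a = (out', pos((p, a) := length out' - 1))"
    by (simp add: stepa_def Let_def out'_def out_def pos_def e_def)
  have ok: "mok (length out) n e" unfolding out_def e_def pos_def using thr_ok[OF p I D] .
  have wf': "wfb n out'" unfolding out'_def using wfb_mcomp[OF _ ok] I by (simp add: Inv_def out_def)
  have len: "length out < length out'" by (simp add: out'_def)
  show ?thesis unfolding Inv_def st' fst_conv snd_conv
  proof (rule conjI[OF wf' ballI])
    fix qa assume qa: "qa \<in> insert (p, a) D"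
    show "(pos((p, a) := length out' - 1)) qa < length out' \<and>
      (\<forall>x. length x = n \<longrightarrow> circ_vals bool_alg x out' ! (pos((p, a) := length out' - 1)) qa = ((snd qa, V x ! fst qa) \<in> r))"
    proof (cases "qa = (p, a)")
      case True
      have "circ_vals bool_alg x out' ! (length out' - 1) = ((a, V x ! p) \<in> r)" if x: "length x = n" for x
      proof -
        have "circ_vals bool_alg x out' ! (length out' - 1) = meval (\<lambda>j. circ_vals bool_alg x out ! j) x e"
          unfolding out'_def by (rule mcomp_eval_cv) (use ok x in simp)
        also have "\<dots> = ((a, V x ! p) \<in> r)"
          unfolding e_def out_def pos_def by (rule thr_eval[OF p I D x]) (use a as in auto)
        finally show ?thesis .
      qed
      then show ?thesis using True len by auto
    next
      case False
      then have qD: "qa \<in> D" using qa by auto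
      have lt: "pos qa < length out" using I qD by (auto simp: Inv_def out_def pos_def)
      have "circ_vals bool_alg x out' ! pos qa = circ_vals bool_alg x out ! pos qa" for x
        unfolding out'_def by (rule circ_vals_append_prefix) (use lt in simp)
      then show ?thesis using False lt len I qD by (auto simp: Inv_def out_def pos_def)
    qed
  qed
qed

lemma stepn_inv:
  assumes p: "p < length t"
  shows "set ys \<subseteq> set as \<Longrightarrow> Inv D st \<Longrightarrow> {(q, b). q < p \<and> b \<in> set as} \<subseteq> D \<Longrightarrow>
    Inv (D \<union> {p} \<times> set ys) (foldl (stepa A r \<iota> as p (t ! p)) st ys)"
proof (induction ys arbitrary: D st)
  case Nil then show ?case by simp
next
  case (Cons y ys)
  have I1: "Inv (insert (p, y) D) (stepa A r \<iota> as p (t ! p) st y)"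
    using stepa_inv[OF p Cons.prems(2,3)] Cons.prems(1) by simp
  have "Inv (insert (p, y) D \<union> {p} \<times> set ys) (foldl (stepa A r \<iota> as p (t ! p)) (stepa A r \<iota> as p (t ! p) st y) ys)"
    using Cons.IH[OF _ I1] Cons.prems by auto
  moreover have "insert (p, y) D \<union> {p} \<times> set ys = D \<union> {p} \<times> set (y # ys)" by auto
  ultimately show ?case by simp
qed

lemma bld_inv:
  "p + length gs = length t \<Longrightarrow> gs = drop p t \<Longrightarrow> Inv {(q, b). q < p \<and> b \<in> set as} st \<Longrightarrow>
    Inv {(q, b). q < length t \<and> b \<in> set as} (bld A r \<iota> as st p gs)"
proof (induction gs arbitrary: p st)
  case Nil then show ?case by simp
next
  case (Cons g gs)
  have p: "p < length t" using Cons.prems(1) by simp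
  have g: "g = t ! p" using Cons.prems(2) p by (metis Cons_nth_drop_Suc list.inject)
  have gs: "gs = drop (Suc p) t" using Cons.prems(2) p by (metis Cons_nth_drop_Suc list.inject)
  have "Inv ({(q, b). q < p \<and> b \<in> set as} \<union> {p} \<times> set as) (foldl (stepa A r \<iota> as p g) st as)"
    unfolding g by (rule stepn_inv[OF p]) (use Cons.prems in auto)
  moreover have "{(q, b). q < p \<and> b \<in> set as} \<union> {p} \<times> set as = {(q, b). q < Suc p \<and> b \<in> set as}" by auto
  ultimately have "Inv {(q, b). q < Suc p \<and> b \<in> set as} (foldl (stepa A r \<iota> as p g) st as)" by simp
  then show ?case using Cons.IH[OF _ gs] Cons.prems(1) by simp
qed

lemma as_ne: "as \<noteq> []"
proof -
  have "\<iota> False \<in> univ A" using rng by auto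
  then show ?thesis using as by auto
qed

lemma eval_in: "length x = n \<Longrightarrow> circ_eval A t (map \<iota> x) \<in> univ A"
proof -
  assume x: "length x = n"
  have tne: "t \<noteq> []" using wf by (simp add: wf_circuit_def)
  have "V x \<noteq> []" using tne by (metis circ_vals_length length_0_conv)
  then have "circ_eval A t (map \<iota> x) = V x ! (length t - 1)" by (simp add: circ_eval_def last_conv_nth)
  then show ?thesis using V_in[OF x, of "length t - 1"] tne by simp
qed

lemma core_main:
  "\<exists>M. (\<forall>i<length as. wf_circuit bool_alg n (M i)) \<and>
    (\<Sum>i<length as. circ_size (M i)) \<le> length as * (4 + length t * (length as * (3 * KK A as))) \<and>
    (\<forall>x. length x = n \<longrightarrow> (\<forall>i<length as. circ_eval bool_alg (M i) x = ((as ! i, circ_eval A t (map \<iota> x)) \<in> r)))"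
proof -
  define st0 :: "bool node list \<times> (nat \<times> 'a \<Rightarrow> nat)" where "st0 = ([Cst False], \<lambda>_. 0)"
  obtain out pos where op: "bld A r \<iota> as st0 0 t = (out, pos)" by fastforce
  have I0: "Inv {(q, b). q < 0 \<and> b \<in> set as} st0"
    by (simp add: Inv_def st0_def wfb_def nokb_def bool_alg_def)
  have I: "Inv {(q, b). q < length t \<and> b \<in> set as} (out, pos)"
    using bld_inv[of 0 t st0] I0 op by simp
  have tne: "t \<noteq> []" using wf by (simp add: wf_circuit_def)
  define N where "N = length t - 1"
  have N: "N < length t" using tne by (simp add: N_def)
  define M where "M = (\<lambda>i. out @ [Gate 1 [pos (N, as ! i), pos (N, as ! i)]])"
  have posl: "pos (N, as ! i) < length out" if "i < length as" for i
    using I N that by (auto simp: Inv_def)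
  have wfM: "wf_circuit bool_alg n (M i)" if "i < length as" for i
    using I posl[OF that] unfolding M_def wf_circuit_bool wfb_snoc
    by (auto simp: Inv_def nokb_def bool_alg_ops)
  have gok: "\<forall>g\<in>set t. gok A g"
  proof
    fix g assume "g \<in> set t"
    then obtain p where "p < length t" "g = t ! p" by (auto simp: in_set_conv_nth)
    then show "gok A g" using t_node[of p] by (cases "t ! p") (auto simp: gok_def)
  qed
  have sz0: "circ_size out \<le> 1 + length t * (length as * (3 * KK A as))"
    using bld_size[OF gok as_ne, of r \<iota> st0 0] op by (simp add: st0_def circ_size_def)
  have szM: "circ_size (M i) \<le> 4 + length t * (length as * (3 * KK A as))" for i
    using sz0 by (simp add: M_def circ_size_def)
  have sz: "(\<Sum>i<length as. circ_size (M i)) \<le> length as * (4 + length t * (length as * (3 * KK A as)))"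
    using sum_bounded_above[of "{..<length as}" "\<lambda>i. circ_size (M i)", OF szM] by simp
  have ev: "circ_eval bool_alg (M i) x = ((as ! i, circ_eval A t (map \<iota> x)) \<in> r)"
    if x: "length x = n" and i: "i < length as" for x i
  proof -
    have "circ_eval bool_alg (M i) x = circ_vals bool_alg x out ! pos (N, as ! i)"
      by (simp add: circ_eval_def M_def circ_vals_snoc bool_alg_ops)
    also have "\<dots> = ((as ! i, V x ! N) \<in> r)" using I N i x by (auto simp: Inv_def)
    also have "V x ! N = circ_eval A t (map \<iota> x)"
    proof -
      have "V x \<noteq> []" using tne by (metis circ_vals_length length_0_conv)
      then show ?thesis by (simp add: circ_eval_def N_def last_conv_nth)
    qed
    finally show ?thesis .
  qed
  show ?thesis using wfM sz ev by blast
qed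

end


theorem mainTheorem3:
  fixes A :: "'a algebra"
  assumes "finite_algebra A" and "totally_ordered A"
  shows "nuP A \<subseteq> MULTIMONOTONE"
proof
  fix L assume "L \<in> nuP A"
  then obtain t \<iota> S c0 where tw: "\<forall>n\<ge>1. wf_circuit A n (t n)" and rng: "range \<iota> \<subseteq> univ A"
    and S: "S \<subseteq> univ A" and tsz: "\<forall>n\<ge>1. circ_size (t n) \<le> c0 * n ^ c0 + c0"
    and L: "\<forall>b. length b \<ge> 1 \<longrightarrow> (b \<in> L \<longleftrightarrow> circ_eval A (t (length b)) (map \<iota> b) \<in> S)"
    unfolding nuP_def by blast
  obtain r0 where lin0: "linear_order_on (univ A) r0" and mono0: "\<forall>(m, f) \<in> set (ops A). \<forall>xs ys.
        set xs \<subseteq> univ A \<and> set ys \<subseteq> univ A \<and> length xs = m \<and> length ys = m \<and>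
        list_all2 (\<lambda>a b. (a, b) \<in> r0) xs ys \<longrightarrow> (f xs, f ys) \<in> r0"
    using assms(2) unfolding totally_ordered_def by blast
  have fin: "finite (univ A)" and clos: "\<forall>(m, f) \<in> set (ops A). \<forall>xs. set xs \<subseteq> univ A \<and> length xs = m \<longrightarrow> f xs \<in> univ A"
    using assms(1) unfolding finite_algebra_def by auto
  define r where "r = (if (\<iota> False, \<iota> True) \<in> r0 then r0 else r0\<inverse>)"
  have lin: "linear_order_on (univ A) r" using lin0 by (simp add: r_def)
  have reflr: "\<And>a. a \<in> univ A \<Longrightarrow> (a, a) \<in> r" and transr: "trans r" and antir: "antisym r"
    using lin unfolding linear_order_on_def partial_order_on_def preorder_on_def refl_on_def by auto
  have monor: "\<forall>(m, f) \<in> set (ops A). \<forall>xs ys.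
        set xs \<subseteq> univ A \<and> set ys \<subseteq> univ A \<and> length xs = m \<and> length ys = m \<and>
        list_all2 (\<lambda>a b. (a, b) \<in> r) xs ys \<longrightarrow> (f xs, f ys) \<in> r"
  proof (cases "(\<iota> False, \<iota> True) \<in> r0")
    case True then show ?thesis using mono0 by (simp add: r_def)
  next
    case False
    have "list_all2 (\<lambda>a b. (a, b) \<in> r0\<inverse>) xs ys = list_all2 (\<lambda>a b. (a, b) \<in> r0) ys xs" for xs ys
      by (auto simp: list_all2_conv_all_nth)
    then show ?thesis using mono0 False unfolding r_def by fastforce
  qed
  have iota: "(\<iota> False, \<iota> True) \<in> r"
  proof (cases "(\<iota> False, \<iota> True) \<in> r0")
    case True then show ?thesis by (simp add: r_def)
  next
    case False
    have inA: "\<iota> False \<in> univ A" "\<iota> True \<in> univ A" using rng by auto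
    have r0refl: "(\<iota> False, \<iota> False) \<in> r0"
      using lin0 inA unfolding linear_order_on_def partial_order_on_def preorder_on_def refl_on_def by auto
    have "\<iota> False \<noteq> \<iota> True" using False r0refl by auto
    then have "(\<iota> True, \<iota> False) \<in> r0"
      using lin0 inA False unfolding linear_order_on_def total_on_def by auto
    then show ?thesis using False by (simp add: r_def)
  qed
  obtain as where as: "set as = univ A" using finite_list[OF fin] by blast
  define k where "k = length as"
  define B where "B = k * (3 * KK A as)"
  define d where "d = 4 * k + k * B * c0 + c0 + 1"
  have core: "core A r \<iota> as n (t n)" if "n \<ge> 1" for n
    using clos reflr transr monor iota rng as tw that by (unfold_locales) auto
  show "L \<in> MULTIMONOTONE"
    unfolding MULTIMONOTONE_def
  proof (rule CollectI, rule exI[of _ k], rule exI[of _ d], rule allI)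
    fix n
    show "\<exists>(g :: bool list \<Rightarrow> bool) (M :: nat \<Rightarrow> bool node list).
        (\<forall>i<k. wf_circuit bool_alg n (M i)) \<and>
        (\<Sum>i<k. circ_size (M i)) \<le> d * n ^ d + d \<and>
        (\<forall>x. length x = n \<longrightarrow> (x \<in> L \<longleftrightarrow> g (map (\<lambda>i. circ_eval bool_alg (M i) x) [0..<k])))"
    proof (cases "n = 0")
      case True
      have w: "wf_circuit bool_alg n [Cst False]" by (simp add: wf_circuit_def bool_alg_def)
      have "(\<Sum>i<k. circ_size [Cst False :: bool node]) \<le> d * n ^ d + d" by (simp add: circ_size_def d_def)
      then show ?thesis using w True
        by (intro exI[of _ "\<lambda>_. [] \<in> L"] exI[of _ "\<lambda>_. [Cst False]"]) auto
    next
      case False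
      then have n1: "n \<ge> 1" by simp
      interpret core A r \<iota> as n "t n" using core[OF n1] .
      obtain M where Mw: "\<forall>i<k. wf_circuit bool_alg n (M i)"
        and Ms: "(\<Sum>i<k. circ_size (M i)) \<le> k * (4 + length (t n) * B)"
        and Me: "\<forall>x. length x = n \<longrightarrow> (\<forall>i<k. circ_eval bool_alg (M i) x = ((as ! i, circ_eval A (t n) (map \<iota> x)) \<in> r))"
        using core_main unfolding k_def B_def by auto
      have lt: "length (t n) \<le> c0 * n ^ c0 + c0"
        using tsz n1 by (metis circ_size_def le_add1 order_trans)
      have "(\<Sum>i<k. circ_size (M i)) \<le> k * (4 + (c0 * n ^ c0 + c0) * B)"
      proof -
        have "k * (4 + length (t n) * B) \<le> k * (4 + (c0 * n ^ c0 + c0) * B)"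
          using lt by (intro mult_le_mono2 add_left_mono mult_right_mono) auto
        then show ?thesis using Ms by linarith
      qed
      also have "\<dots> = 4 * k + (k * B * c0) * n ^ c0 + k * B * c0" by (simp add: algebra_simps)
      also have "\<dots> \<le> d * n ^ d + d"
      proof -
        have "n ^ c0 \<le> n ^ d" using n1 by (intro power_increasing) (auto simp: d_def)
        then have "(k * B * c0) * n ^ c0 \<le> d * n ^ d" by (intro mult_mono) (auto simp: d_def)
        then show ?thesis by (simp add: d_def)
      qed
      finally have sz: "(\<Sum>i<k. circ_size (M i)) \<le> d * n ^ d + d" .
      define g where "g = (\<lambda>bits :: bool list. \<exists>i<k. as ! i \<in> S \<and> bits ! i \<and> (\<forall>i'<k. bits ! i' \<longrightarrow> (as ! i', as ! i) \<in> r))"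
      have ev: "x \<in> L \<longleftrightarrow> g (map (\<lambda>i. circ_eval bool_alg (M i) x) [0..<k])" if x: "length x = n" for x
      proof -
        define v where "v = circ_eval A (t n) (map \<iota> x)"
        have vA: "v \<in> univ A" unfolding v_def using eval_in[OF x] .
        have xL: "x \<in> L \<longleftrightarrow> v \<in> S" using L x n1 by (simp add: v_def)
        have bits: "map (\<lambda>i. circ_eval bool_alg (M i) x) [0..<k] ! i = ((as ! i, v) \<in> r)" if "i < k" for i
          using Me x that by (simp add: v_def)
        have gv: "g (map (\<lambda>i. circ_eval bool_alg (M i) x) [0..<k]) \<longleftrightarrow>
            (\<exists>i<k. as ! i \<in> S \<and> (as ! i, v) \<in> r \<and> (\<forall>i'<k. (as ! i', v) \<in> r \<longrightarrow> (as ! i', as ! i) \<in> r))"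
          unfolding g_def using bits by auto
        obtain iv where iv: "iv < k" "as ! iv = v" using vA as by (metis in_set_conv_nth k_def)
        show ?thesis
        proof
          assume "x \<in> L"
          then have "v \<in> S" using xL by simp
          then show "g (map (\<lambda>i. circ_eval bool_alg (M i) x) [0..<k])"
            unfolding gv using iv reflr vA by auto
        next
          assume "g (map (\<lambda>i. circ_eval bool_alg (M i) x) [0..<k])"
          then obtain i where i: "i < k" "as ! i \<in> S" "(as ! i, v) \<in> r" "\<forall>i'<k. (as ! i', v) \<in> r \<longrightarrow> (as ! i', as ! i) \<in> r"
            unfolding gv by blast
          have "(v, as ! i) \<in> r" using i(4) iv reflr vA by metis
          then have "as ! i = v" using i(3) antir by (auto dest: antisymD)
          then show "x \<in> L" using xL i(2) by simp
        qed
      qed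
      show ?thesis using Mw sz ev by blast
    qed
  qed
qed


end
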